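(* Let $n,k\geq 1$ and let ${\bf m}=(m_1,\dots,m_k)$ be an array of nonnegative integers. For every permutation $\tau\in\mathfrak{S}_k$ there exists a bijection $\mathfrak{a}\mapsto\mathfrak{b}$ from $\mathcal{A}_n^k({\bf m})$ onto $\mathcal{A}_n^k({\bf m}')$, where ${\bf m}'=(m_{\tau(1)},\dots,m_{\tau(k)})$, such that $\mathrm{DEZ}(\mathfrak{a})=\mathrm{DEZ}(\mathfrak{b})$ and $\mathrm{Der}(\mathfrak{a})=\mathrm{Der}(\mathfrak{b})$.
   Context: $\mathfrak{S}_n$ is the set of permutations of $[n]=\{1,\dots,n\}$; $\mathrm{FIX}(\pi)=\{i:\pi(i)=i\}$. For $k\ge1$, a $k$-arrangement of $[n]$ is a pair $\mathfrak{a}=(\pi,\phi)$ with $\pi\in\mathfrak{S}_n$ and $\phi:\mathrm{FIX}(\pi)\to\{-1,\dots,-k\}$ arbitrary; $\mathcal{A}_n^k$ is the set of them. The positive reduction of an integer word replaces every occurrence of its $i$-th smallest positive letter by $i$, for all $i$ (negative letters unchanged). The derangement form $\mathrm{df}_k(\mathfrak{a})$ is obtained from $\pi(1)\cdots\pi(n)$ by replacing $\pi(i)$ with $\phi(i)$ for each $i\in\mathrm{FIX}(\pi)$ and then applying positive reduction. For an integer word $w=w_1\cdots w_n$, $\mathrm{DES}(w)=\{i\in[n-1]:w_i>w_{i+1}\}$, and $\mathrm{Pos}(w)$ is the subword of positive letters. $\mathrm{DEZ}(\mathfrak{a})=\mathrm{DES}(\mathrm{df}_k(\mathfrak{a}))$,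 $\mathrm{Der}(\mathfrak{a})=\mathrm{Pos}(\mathrm{df}_k(\mathfrak{a}))$, $\mathrm{fix}_i(\mathfrak{a})=|\{j\in\mathrm{FIX}(\pi):\phi(j)=-i\}|$, and $\mathcal{A}_n^k({\bf m})=\{\mathfrak{a}\in\mathcal{A}_n^k:\mathrm{fix}_i(\mathfrak{a})=m_i,\ 1\le i\le k\}$. *)

theory Defs
  imports "HOL-Combinatorics.Permutations"
begin

definition FIX :: "nat \<Rightarrow> (nat \<Rightarrow> nat) \<Rightarrow> nat set" where
  "FIX n \<pi> = {i \<in> {1..n}. \<pi> i = i}"

text \<open>k-arrangements of [n]: pairs (pi, phi), pi a permutation of {1..n},
  phi : FIX(pi) -> {-1,...,-k}; phi is normalised to 0 outside FIX(pi)
  so that the pair is uniquely represented.\<close>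
definition arrangements :: "nat \<Rightarrow> nat \<Rightarrow> ((nat \<Rightarrow> nat) \<times> (nat \<Rightarrow> int)) set" where
  "arrangements n k = {(\<pi>, \<phi>). \<pi> permutes {1..n}
      \<and> (\<forall>i \<in> FIX n \<pi>. \<phi> i \<in> {-int k..-1})
      \<and> (\<forall>i. i \<notin> FIX n \<pi> \<longrightarrow> \<phi> i = 0)}"

definition fixcount :: "nat \<Rightarrow> (nat \<Rightarrow> nat) \<times> (nat \<Rightarrow> int) \<Rightarrow> nat \<Rightarrow> nat" where
  "fixcount n a i = card {j \<in> FIX n (fst a). snd a j = - int i}"

definition arrangements_m :: "nat \<Rightarrow> nat \<Rightarrow> (nat \<Rightarrow> nat) \<Rightarrow> ((nat \<Rightarrow> nat) \<times> (nat \<Rightarrow> int)) set" where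
  "arrangements_m n k m = {a \<in> arrangements n k. \<forall>i \<in> {1..k}. fixcount n a i = m i}"

definition pos_red :: "int list \<Rightarrow> int list" where
  "pos_red w = map (\<lambda>x. if x > 0 then int (card {y \<in> set w. 0 < y \<and> y \<le> x}) else x) w"

definition df :: "nat \<Rightarrow> (nat \<Rightarrow> nat) \<times> (nat \<Rightarrow> int) \<Rightarrow> int list" where
  "df n a = pos_red (map (\<lambda>i. if fst a i = i then snd a i else int (fst a i)) [1..<n+1])"

text \<open>Descent set of a word, positions 1-based.\<close>
definition DES :: "int list \<Rightarrow> nat set" where
  "DES w = {i \<in> {1..<length w}. w ! (i - 1) > w ! i}"

definition Pos :: "int list \<Rightarrow> int list" where
  "Pos w = filter (\<lambda>x. x > 0) w"

definition DEZ :: "nat \<Rightarrow> (nat \<Rightarrow> nat) \<times> (nat \<Rightarrow> int) \<Rightarrow> nat set" where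
  "DEZ n a = DES (df n a)"

definition Der :: "nat \<Rightarrow> (nat \<Rightarrow> nat) \<times> (nat \<Rightarrow> int) \<Rightarrow> int list" where
  "Der n a = Pos (df n a)"

end

theory Submission
  imports Defs
begin

definition na :: "int \<Rightarrow> int list \<Rightarrow> nat" where
  "na c xs = length (takeWhile (\<lambda>u. u = c) xs)"
definition nb :: "int \<Rightarrow> int list \<Rightarrow> nat" where
  "nb c xs = length (takeWhile (\<lambda>u. u = c + 1) (drop (na c xs) xs))"
definition rst :: "int \<Rightarrow> int list \<Rightarrow> int list" where
  "rst c xs = drop (nb c xs) (drop (na c xs) xs)"
definition isx :: "int \<Rightarrow> int list \<Rightarrow> bool" where
  "isx c ys = (ys \<noteq> [] \<and> hd ys = c)"

lemma decomp: "xs = replicate (na c xs) c @ replicate (nb c xs) (c+1) @ rst c xs"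
proof -
  have 1: "takeWhile (\<lambda>u. u = c) xs = replicate (na c xs) c"
    unfolding na_def by (metis (mono_tags) replicate_length_same set_takeWhileD)
  have 2: "takeWhile (\<lambda>u. u = c+1) (drop (na c xs) xs) = replicate (nb c xs) (c+1)"
    unfolding nb_def by (metis (mono_tags) replicate_length_same set_takeWhileD)
  have "xs = takeWhile (\<lambda>u. u = c) xs @ drop (na c xs) xs"
    unfolding na_def by (metis append_take_drop_id takeWhile_eq_take)
  moreover have "drop (na c xs) xs = takeWhile (\<lambda>u. u = c+1) (drop (na c xs) xs) @ rst c xs"
    unfolding rst_def nb_def by (metis append_take_drop_id takeWhile_eq_take)
  ultimately show ?thesis using 1 2 by simp
qed

lemma rst_alt: "rst c xs = dropWhile (\<lambda>u. u = c + 1) (dropWhile (\<lambda>u. u = c) xs)"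
  unfolding rst_def nb_def na_def dropWhile_eq_drop[of "\<lambda>u. u = c"] dropWhile_eq_drop[of "\<lambda>u. u = c + 1"] by (rule refl)

lemma rst_hd1: "rst c xs \<noteq> [] \<Longrightarrow> hd (rst c xs) \<noteq> c + 1"
  using hd_dropWhile[of "\<lambda>u. u = c+1" "dropWhile (\<lambda>u. u = c) xs"] unfolding rst_alt by blast

lemma rst_hd2: 
  assumes "nb c xs = 0" "rst c xs \<noteq> []" shows "hd (rst c xs) \<noteq> c"
proof -
  have "rst c xs = drop (na c xs) xs" using assms(1) by (simp add: rst_def)
  also have "\<dots> = dropWhile (\<lambda>u. u = c) xs" by (simp add: na_def dropWhile_eq_drop)
  finally have e: "rst c xs = dropWhile (\<lambda>u. u = c) xs" .
  show ?thesis using hd_dropWhile[of "\<lambda>u. u = c" xs] assms(2) unfolding e by blast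
qed

lemma tw: "(zs = [] \<or> hd zs \<noteq> d) \<Longrightarrow> takeWhile (\<lambda>u. u = d) (replicate a d @ zs) = replicate a d"
proof (induct a)
  case 0 then show ?case by (cases zs) auto
next
  case (Suc a) then show ?case by simp
qed

lemma parse_unique:
  assumes "ys = [] \<or> hd ys \<noteq> c + 1" and "b = 0 \<longrightarrow> ys = [] \<or> hd ys \<noteq> c"
  shows "na c (replicate a c @ replicate b (c+1) @ ys) = a"
    "nb c (replicate a c @ replicate b (c+1) @ ys) = b"
    "rst c (replicate a c @ replicate b (c+1) @ ys) = ys"
proof -
  have A: "na c (replicate a c @ replicate b (c+1) @ ys) = a"
  proof (cases b)
    case 0 
    then have "ys = [] \<or> hd ys \<noteq> c" using assms(2) by blast
    then have "takeWhile (\<lambda>u. u = c) (replicate a c @ ys) = replicate a c" by (rule tw)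
    then show ?thesis using 0 by (simp add: na_def)
  next
    case (Suc b') 
    have "replicate b (c+1) @ ys = [] \<or> hd (replicate b (c+1) @ ys) \<noteq> c" using Suc by simp
    then have "takeWhile (\<lambda>u. u = c) (replicate a c @ (replicate b (c+1) @ ys)) = replicate a c" by (rule tw)
    then show ?thesis by (simp add: na_def)
  qed
  then show "na c (replicate a c @ replicate b (c+1) @ ys) = a" .
  have "takeWhile (\<lambda>u. u = c + 1) (replicate b (c+1) @ ys) = replicate b (c+1)"
    using assms(1) by (rule tw)
  then have B: "nb c (replicate a c @ replicate b (c+1) @ ys) = b"
    using A by (simp add: nb_def)
  then show "nb c (replicate a c @ replicate b (c+1) @ ys) = b" .
  show "rst c (replicate a c @ replicate b (c+1) @ ys) = ys"
    unfolding rst_def A B by simp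
qed

lemma rst_len: "v = c \<or> v = c + 1 \<Longrightarrow> length (rst c (v # vs)) < Suc (length vs)"
proof -
  assume v: "v = c \<or> v = c + 1"
  have "length (v#vs) = length (replicate (na c (v#vs)) c @ replicate (nb c (v#vs)) (c+1) @ rst c (v#vs))"
    using decomp[of "v#vs" c] by (rule arg_cong)
  then have "length (v#vs) = na c (v#vs) + nb c (v#vs) + length (rst c (v#vs))"
    by simp
  moreover have "na c (v#vs) + nb c (v#vs) \<ge> 1"
    using v by (auto simp: na_def nb_def)
  ultimately have "length (rst c (v#vs)) < length (v#vs)" by linarith
  then show ?thesis by simp
qed

function tr :: "int \<Rightarrow> bool \<Rightarrow> int list \<Rightarrow> int list" where
  "tr c L [] = []"
| "tr c L (v # vs) = (if v \<noteq> c \<and> v \<noteq> c + 1 then v # tr c False vs else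
     replicate (nb c (v#vs) + of_bool L - of_bool (isx c (rst c (v#vs)))) c @
     replicate (na c (v#vs) + of_bool (isx c (rst c (v#vs))) - of_bool L) (c+1) @
     tr c (isx c (rst c (v#vs))) (rst c (v#vs)))"
  by pat_completeness auto
termination
proof (relation "measure (\<lambda>(c,L,xs). length xs)", goal_cases)
  case 1 show ?case by simp
next
  case (2 c L v vs) then show ?case by simp
next
  case (3 c L v vs) then have "v = c \<or> v = c + 1" by blast
  then show ?case using rst_len[of v c vs] by simp
qed

lemma chunk:
  assumes v: "v = c \<or> v = c + 1" and P: "L \<longrightarrow> isx c (v#vs)"
  defines "xs \<equiv> v # vs"
  defines "a \<equiv> na c xs" and "b \<equiv> nb c xs" and "r \<equiv> rst c xs"
  defines "R \<equiv> isx c r"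
  shows "tr c L xs = replicate (b + of_bool L - of_bool R) c @ replicate (a + of_bool R - of_bool L) (c+1) @ tr c R r"
    and "xs = replicate a c @ replicate b (c+1) @ r"
    and "a \<ge> of_bool L" and "b \<ge> of_bool R" and "a + b \<ge> 1"
    and "r \<noteq> [] \<Longrightarrow> hd r \<noteq> c + 1"
    and "b = 0 \<Longrightarrow> r \<noteq> [] \<Longrightarrow> hd r \<noteq> c"
    and "length r < length xs"
proof -
  show "tr c L xs = replicate (b + of_bool L - of_bool R) c @ replicate (a + of_bool R - of_bool L) (c+1) @ tr c R r"
    using v unfolding xs_def a_def b_def r_def R_def by auto
  show d: "xs = replicate a c @ replicate b (c+1) @ r"
    unfolding a_def b_def r_def by (rule decomp)
  show "a \<ge> of_bool L"
    using P unfolding a_def xs_def isx_def na_def by auto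
  show "r \<noteq> [] \<Longrightarrow> hd r \<noteq> c + 1" unfolding r_def by (rule rst_hd1)
  show h2: "b = 0 \<Longrightarrow> r \<noteq> [] \<Longrightarrow> hd r \<noteq> c" unfolding r_def b_def by (rule rst_hd2)
  show "b \<ge> of_bool R"
    using h2 unfolding R_def isx_def by (cases "b = 0") auto
  show "a + b \<ge> 1"
    using v unfolding a_def b_def xs_def by (auto simp: na_def nb_def)
  show "length r < length xs" using rst_len[OF v] unfolding r_def xs_def by simp
qed

lemma hd_tr:
  assumes "xs \<noteq> []" and P: "L \<longrightarrow> isx c xs"
  shows "tr c L xs \<noteq> [] \<and> (hd xs \<noteq> c \<and> hd xs \<noteq> c + 1 \<longrightarrow> hd (tr c L xs) = hd xs)
    \<and> (hd xs = c \<or> hd xs = c + 1 \<longrightarrow> hd (tr c L xs) = c \<or> hd (tr c L xs) = c + 1)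
    \<and> (L \<longrightarrow> hd (tr c L xs) = c)"
proof -
  obtain v vs where xs: "xs = v # vs" using assms(1) by (cases xs) auto
  show ?thesis
  proof (cases "v = c \<or> v = c + 1")
    case True
    note ch = chunk[OF True, of L vs]
    define a where "a = na c xs"
    define b where "b = nb c xs"
    define r where "r = rst c xs"
    define R where "R = isx c r"
    have e: "tr c L xs = replicate (b + of_bool L - of_bool R) c @ replicate (a + of_bool R - of_bool L) (c+1) @ tr c R r"
      and 1: "a \<ge> of_bool L" and 2: "b \<ge> of_bool R" and 3: "a + b \<ge> 1"
      using ch P unfolding xs a_def b_def r_def R_def by auto
    have L: "L \<Longrightarrow> b + of_bool L - of_bool R \<ge> 1" using 2 by auto
    show ?thesis
    proof (cases "b + of_bool L - of_bool R")
      case 0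
      then have "a + of_bool R - of_bool L \<ge> 1" using 1 2 3 by (cases L; cases R) auto
      then show ?thesis using 0 e L xs True by (cases "a + of_bool R - of_bool L") auto
    next
      case (Suc n)
      then show ?thesis using e xs True by auto
    qed
  next
    case False
    then show ?thesis using P xs by (auto simp: isx_def)
  qed
qed

definition msk :: "int \<Rightarrow> int \<Rightarrow> int option" where
  "msk c u = (if u = c \<or> u = c + 1 then None else Some u)"

lemma rep2: "n1 + n2 = m1 + m2 \<Longrightarrow> replicate n1 x @ replicate n2 x @ X = replicate m1 x @ replicate m2 x @ X"
  by (metis append_assoc replicate_add)

lemma tr_msk: "(L \<longrightarrow> isx c xs) \<Longrightarrow> map (msk c) (tr c L xs) = map (msk c) xs"
proof (induction c L xs rule: tr.induct)
  case (1 c L)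
  then show ?case by simp
next
  case (2 c L v vs)
  show ?case
  proof (cases "v = c \<or> v = c + 1")
    case True
    note ch = chunk[OF True 2(3)]
    define xs where "xs = v # vs"
    define a where "a = na c xs"
    define b where "b = nb c xs"
    define r where "r = rst c xs"
    define R where "R = isx c r"
    have e: "tr c L xs = replicate (b + of_bool L - of_bool R) c @ replicate (a + of_bool R - of_bool L) (c+1) @ tr c R r"
      and d: "xs = replicate a c @ replicate b (c+1) @ r"
      and g1: "a \<ge> of_bool L" and g2: "b \<ge> of_bool R"
      using ch unfolding xs_def a_def b_def r_def R_def by auto
    have IH: "map (msk c) (tr c R r) = map (msk c) r"
      unfolding R_def r_def xs_def apply (rule 2(2)) using True by auto
    have "map (msk c) (tr c L xs) = replicate (b + of_bool L - of_bool R) None @ replicate (a + of_bool R - of_bool L) None @ map (msk c) r"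
      using e IH by (simp add: msk_def)
    also have "\<dots> = replicate a None @ replicate b None @ map (msk c) r"
      apply (rule rep2) using g1 g2 by (cases L; cases R) auto
    also have "\<dots> = map (msk c) xs"
      by (subst d) (simp add: msk_def)
    finally show ?thesis unfolding xs_def .
  next
    case False
    then show ?thesis using 2 by (auto simp: msk_def)
  qed
qed

lemma chunkT:
  assumes ne: "xs \<noteq> []" and h: "hd xs = c \<or> hd xs = c + 1" and P: "L \<longrightarrow> isx c xs"
  defines "a \<equiv> na c xs" and "b \<equiv> nb c xs" and "r \<equiv> rst c xs"
  defines "R \<equiv> isx c r"
  defines "a' \<equiv> b + of_bool L - of_bool R" and "b' \<equiv> a + of_bool R - of_bool L"
  defines "T \<equiv> tr c R r"
  shows "tr c L xs = replicate a' c @ replicate b' (c+1) @ T"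
    and "xs = replicate a c @ replicate b (c+1) @ r"
    and "a' + b' = a + b" and "a + b \<ge> 1" and "L \<longrightarrow> a' \<ge> 1"
    and "r = [] \<Longrightarrow> T = []"
    and "r \<noteq> [] \<Longrightarrow> hd r = c \<Longrightarrow> R \<and> b \<ge> 1 \<and> b' \<ge> 1 \<and> T \<noteq> [] \<and> hd T = c"
    and "r \<noteq> [] \<Longrightarrow> hd r \<noteq> c \<Longrightarrow> \<not> R \<and> hd r \<noteq> c + 1 \<and> T \<noteq> [] \<and> hd T = hd r"
    and "length r < length xs"
proof -
  obtain v vs where xs: "xs = v # vs" using ne by (cases xs) auto
  have v: "v = c \<or> v = c + 1" using h xs by simp
  have P': "L \<longrightarrow> isx c (v#vs)" using P xs by simp
  note ch = chunk[OF v P']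
  have e: "tr c L xs = replicate (b + of_bool L - of_bool R) c @ replicate (a + of_bool R - of_bool L) (c+1) @ tr c R r"
    and d: "xs = replicate a c @ replicate b (c+1) @ r"
    and g1: "a \<ge> of_bool L" and g2: "b \<ge> of_bool R" and g3: "a + b \<ge> 1"
    and h1: "r \<noteq> [] \<Longrightarrow> hd r \<noteq> c + 1"
    and h2: "b = 0 \<Longrightarrow> r \<noteq> [] \<Longrightarrow> hd r \<noteq> c"
    and l: "length r < length xs"
    using ch unfolding xs a_def b_def r_def R_def by auto
  show "tr c L xs = replicate a' c @ replicate b' (c+1) @ T" using e unfolding a'_def b'_def T_def .
  show "xs = replicate a c @ replicate b (c+1) @ r" by (rule d)
  show "a' + b' = a + b" unfolding a'_def b'_def using g1 g2 by (cases L; cases R) auto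
  show "a + b \<ge> 1" by (rule g3)
  show "L \<longrightarrow> a' \<ge> 1" unfolding a'_def using g2 by (cases L; cases R) auto
  show "r = [] \<Longrightarrow> T = []" unfolding T_def by simp
  show "length r < length xs" by (rule l)
  have PR: "R \<longrightarrow> isx c r" unfolding R_def by simp
  show "r \<noteq> [] \<Longrightarrow> hd r = c \<Longrightarrow> R \<and> b \<ge> 1 \<and> b' \<ge> 1 \<and> T \<noteq> [] \<and> hd T = c"
  proof -
    assume r1: "r \<noteq> []" "hd r = c"
    then have RR: R unfolding R_def isx_def by simp
    have "b \<ge> 1" using h2 r1 by (cases b) auto
    moreover have "b' \<ge> 1" unfolding b'_def using g1 RR by (cases L) auto
    moreover have "T \<noteq> [] \<and> hd T = c" using hd_tr[OF r1(1) PR] RR unfolding T_def by blast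
    ultimately show ?thesis using RR by blast
  qed
  show "r \<noteq> [] \<Longrightarrow> hd r \<noteq> c \<Longrightarrow> \<not> R \<and> hd r \<noteq> c + 1 \<and> T \<noteq> [] \<and> hd T = hd r"
  proof -
    assume r1: "r \<noteq> []" "hd r \<noteq> c"
    then have RR: "\<not> R" unfolding R_def isx_def by simp
    have "hd r \<noteq> c + 1" using h1 r1 by blast
    then show ?thesis using hd_tr[OF r1(1) PR] RR r1 unfolding T_def by blast
  qed
qed

lemma tr_nonchunk: "v \<noteq> c \<Longrightarrow> v \<noteq> c + 1 \<Longrightarrow> tr c L (v # vs) = v # tr c False vs"
  by simp

lemma tr_filter:
  "\<not> P c \<Longrightarrow> \<not> P (c + 1) \<Longrightarrow> (L \<longrightarrow> isx c xs) \<Longrightarrow> filter P (tr c L xs) = filter P xs"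
proof (induction c L xs rule: tr.induct)
  case (1 c L)
  then show ?case by simp
next
  case (2 c L v vs)
  show ?case
  proof (cases "v = c \<or> v = c + 1")
    case True
    define xs where "xs = v # vs"
    have ne: "xs \<noteq> []" and h: "hd xs = c \<or> hd xs = c + 1" using True unfolding xs_def by auto
    have P: "L \<longrightarrow> isx c xs" using 2 unfolding xs_def by simp
    define a where "a = na c xs"
    define b where "b = nb c xs"
    define r where "r = rst c xs"
    define R where "R = isx c r"
    define T where "T = tr c R r"
    define a' where "a' = b + of_bool L - of_bool R"
    define b' where "b' = a + of_bool R - of_bool L"
    note C = chunkT[OF ne h P, folded r_def, folded R_def, folded T_def, folded a_def b_def, folded a'_def b'_def]
    have IH: "filter P T = filter P r"
      unfolding T_def R_def r_def xs_def apply (rule 2(2)) using True 2(3,4) by auto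
    have "filter P (tr c L xs) = filter P T" using C(1) 2(3,4) by (simp add: filter_replicate)
    also have "\<dots> = filter P xs" using IH 2(3,4) by (subst C(2)) (simp add: filter_replicate)
    finally show ?thesis unfolding xs_def .
  next
    case False
    then show ?thesis using 2 by (auto simp: isx_def)
  qed
qed

definition cnt :: "int \<Rightarrow> int list \<Rightarrow> nat" where
  "cnt d ys = length (filter (\<lambda>u. u = d) ys)"

lemma tr_count:
  "(L \<longrightarrow> isx c xs) \<Longrightarrow> cnt c (tr c L xs) = cnt (c+1) xs + of_bool L \<and> cnt (c+1) (tr c L xs) + of_bool L = cnt c xs"
proof (induction c L xs rule: tr.induct)
  case (1 c L)
  then show ?case by (simp add: isx_def cnt_def)
next
  case (2 c L v vs)
  show ?case
  proof (cases "v = c \<or> v = c + 1")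
    case True
    define xs where "xs = v # vs"
    have ne: "xs \<noteq> []" and h: "hd xs = c \<or> hd xs = c + 1" using True unfolding xs_def by auto
    have P: "L \<longrightarrow> isx c xs" using 2 unfolding xs_def by simp
    define a where "a = na c xs"
    define b where "b = nb c xs"
    define r where "r = rst c xs"
    define R where "R = isx c r"
    define T where "T = tr c R r"
    define a' where "a' = b + of_bool L - of_bool R"
    define b' where "b' = a + of_bool R - of_bool L"
    note C = chunkT[OF ne h P, folded r_def, folded R_def, folded T_def, folded a_def b_def, folded a'_def b'_def]
    have IH: "cnt c T = cnt (c+1) r + of_bool R \<and> cnt (c+1) T + of_bool R = cnt c r"
      unfolding T_def R_def r_def xs_def apply (rule 2(2)) using True by auto
    have e1: "cnt c (tr c L xs) = a' + cnt c T" "cnt (c+1) (tr c L xs) = b' + cnt (c+1) T"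
      using C(1) by (simp_all add: cnt_def filter_replicate)
    have e2: "cnt c xs = a + cnt c r" "cnt (c+1) xs = b + cnt (c+1) r"
      by (subst C(2), simp add: cnt_def filter_replicate)+
    have g: "L \<longrightarrow> a \<ge> 1" using P unfolding a_def isx_def na_def using ne by (cases xs) auto
    have g2: "R \<longrightarrow> b \<ge> 1" using C(7) unfolding R_def isx_def by blast
    show ?thesis unfolding xs_def[symmetric] using e1 e2 IH g g2 unfolding a'_def b'_def
      by (cases L; cases R) auto
  next
    case False
    then have "\<not> L" using 2(3) by (auto simp: isx_def)
    have F': "v \<noteq> c \<and> v \<noteq> c + 1" using False by blast
    then show ?thesis using 2(1)[OF F'] \<open>\<not> L\<close> by (simp add: cnt_def)
  qed
qed

lemma tr_inv: "(L \<longrightarrow> isx c xs) \<Longrightarrow> tr c L (tr c L xs) = xs"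
proof (induction c L xs rule: tr.induct)
  case (1 c L)
  then show ?case by simp
next
  case (2 c L v vs)
  show ?case
  proof (cases "v = c \<or> v = c + 1")
    case True
    define xs where "xs = v # vs"
    have ne: "xs \<noteq> []" and h: "hd xs = c \<or> hd xs = c + 1" using True unfolding xs_def by auto
    have P: "L \<longrightarrow> isx c xs" using 2 unfolding xs_def by simp
    define a where "a = na c xs"
    define b where "b = nb c xs"
    define r where "r = rst c xs"
    define R where "R = isx c r"
    define T where "T = tr c R r"
    define a' where "a' = b + of_bool L - of_bool R"
    define b' where "b' = a + of_bool R - of_bool L"
    note C = chunkT[OF ne h P, folded r_def, folded R_def, folded T_def, folded a_def b_def, folded a'_def b'_def]
    have IH: "tr c R T = r"
      unfolding T_def R_def r_def xs_def apply (rule 2(2)) using True by auto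
    define out where "out = tr c L xs"
    have out: "out = replicate a' c @ replicate b' (c+1) @ T" using C(1) unfolding out_def .
    have ab: "a' + b' = a + b" "a + b \<ge> 1" using C(3,4) by auto
    have pu1: "T = [] \<or> hd T \<noteq> c + 1" and pu2: "b' = 0 \<longrightarrow> T = [] \<or> hd T \<noteq> c"
      and RT: "R = isx c T"
    proof -
      have "(T = [] \<or> hd T \<noteq> c + 1) \<and> (b' = 0 \<longrightarrow> T = [] \<or> hd T \<noteq> c) \<and> R = isx c T"
      proof (cases "r = []")
        case True then show ?thesis using C(6) unfolding R_def isx_def by simp
      next
        case False
        show ?thesis
        proof (cases "hd r = c")
          case True then show ?thesis using C(7)[OF False] unfolding isx_def by auto
        next
          case F2: False then show ?thesis using C(8)[OF False] unfolding isx_def by auto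
        qed
      qed
      then show "T = [] \<or> hd T \<noteq> c + 1" "b' = 0 \<longrightarrow> T = [] \<or> hd T \<noteq> c" "R = isx c T" by auto
    qed
    have pna: "na c out = a'" "nb c out = b'" "rst c out = T"
      unfolding out using parse_unique[OF pu1 pu2] by auto
    have one: "out \<noteq> [] \<and> (hd out = c \<or> hd out = c + 1)"
      unfolding out
    proof (cases a')
      case 0
      then obtain n where "b' = Suc n" using ab by (cases b') auto
      then show "replicate a' c @ replicate b' (c + 1) @ T \<noteq> [] \<and> (hd (replicate a' c @ replicate b' (c + 1) @ T) = c \<or> hd (replicate a' c @ replicate b' (c + 1) @ T) = c + 1)"
        using 0 by simp
    next
      case (Suc n)
      then show "replicate a' c @ replicate b' (c + 1) @ T \<noteq> [] \<and> (hd (replicate a' c @ replicate b' (c + 1) @ T) = c \<or> hd (replicate a' c @ replicate b' (c + 1) @ T) = c + 1)"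
        by simp
    qed
    have Lo: "L \<longrightarrow> isx c out" using C(5) unfolding out isx_def by (cases a') auto
    note C2 = chunkT[OF one[THEN conjunct1] one[THEN conjunct2] Lo]
    have "tr c L out = replicate (b' + of_bool L - of_bool R) c @ replicate (a' + of_bool R - of_bool L) (c+1) @ tr c R T"
      using C2(1) unfolding pna RT[symmetric] .
    also have "\<dots> = replicate a c @ replicate b (c+1) @ r"
    proof -
      have g: "L \<longrightarrow> a \<ge> 1" using P unfolding a_def isx_def na_def using ne by (cases xs) auto
      have g2: "R \<longrightarrow> b \<ge> 1" using C(7) unfolding R_def isx_def by blast
      have "b' + of_bool L - of_bool R = a \<and> a' + of_bool R - of_bool L = b"
        unfolding a'_def b'_def using g g2 by (cases L; cases R; auto)
      then show ?thesis using IH by simp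
    qed
    also have "\<dots> = xs" using C(2) by simp
    finally show ?thesis unfolding out_def xs_def .
  next
    case False
    then have "\<not> L" using 2(3) by (auto simp: isx_def)
    have F': "v \<noteq> c \<and> v \<noteq> c + 1" using False by blast
    then show ?thesis using 2(1)[OF F'] \<open>\<not> L\<close> by simp
  qed
qed

fun dsc :: "int list \<Rightarrow> bool list" where
  "dsc (u # w # r) = (u > w) # dsc (w # r)"
| "dsc _ = []"

lemma dsc_Cons: "dsc (u # w) = (if w = [] then [] else (u > hd w) # dsc w)"
  by (cases w) auto

lemma dsc_repc: "dsc (replicate (Suc n) d @ T) = replicate n False @ dsc (d # T)"
  by (induct n) (auto simp: dsc_Cons)

lemma dsc_rep:
  assumes "a + b \<ge> 1"
  shows "dsc (replicate a c @ replicate b (c+1) @ T) = replicate (a+b-1) False @ dsc ((if b > 0 then c+1 else c) # T)"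
proof (cases b)
  case 0
  then obtain a0 where a0: "a = Suc a0" using assms by (cases a) auto
  show ?thesis using dsc_repc[of a0 c T] 0 a0 by simp
next
  case (Suc b0)
  show ?thesis
  proof (cases a)
    case 0 then show ?thesis using dsc_repc[of b0 "c+1" T] Suc by simp
  next
    case (Suc a0)
    have "dsc (replicate a c @ replicate b (c+1) @ T) = replicate a0 False @ dsc (c # replicate b (c+1) @ T)"
      using dsc_repc[of a0 c "replicate b (c+1) @ T"] Suc by simp
    also have "dsc (c # replicate b (c+1) @ T) = False # dsc (replicate b (c+1) @ T)"
      using \<open>b = Suc b0\<close> by (simp add: dsc_Cons)
    also have "dsc (replicate b (c+1) @ T) = replicate b0 False @ dsc ((c+1) # T)"
      using dsc_repc[of b0 "c+1" T] \<open>b = Suc b0\<close> by simp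
    finally show ?thesis using Suc \<open>b = Suc b0\<close> by (simp add: replicate_append_same[symmetric] replicate_add[symmetric])
  qed
qed

lemma tr_dsc: "(L \<longrightarrow> isx c xs) \<Longrightarrow> dsc (tr c L xs) = dsc xs"
proof (induction c L xs rule: tr.induct)
  case (1 c L)
  then show ?case by simp
next
  case (2 c L v vs)
  show ?case
  proof (cases "v = c \<or> v = c + 1")
    case True
    define xs where "xs = v # vs"
    have ne: "xs \<noteq> []" and h: "hd xs = c \<or> hd xs = c + 1" using True unfolding xs_def by auto
    have P: "L \<longrightarrow> isx c xs" using 2 unfolding xs_def by simp
    define a where "a = na c xs"
    define b where "b = nb c xs"
    define r where "r = rst c xs"
    define R where "R = isx c r"
    define T where "T = tr c R r"
    define a' where "a' = b + of_bool L - of_bool R"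
    define b' where "b' = a + of_bool R - of_bool L"
    note C = chunkT[OF ne h P, folded r_def, folded R_def, folded T_def, folded a_def b_def, folded a'_def b'_def]
    have IH: "dsc T = dsc r"
      unfolding T_def R_def r_def xs_def apply (rule 2(2)) using True by auto
    have ab: "a' + b' = a + b" "a + b \<ge> 1" using C(3,4) by auto
    have ab': "a' + b' \<ge> 1" using ab by simp
    have "dsc (tr c L xs) = replicate (a'+b'-1) False @ dsc ((if b' > 0 then c+1 else c) # T)"
      unfolding C(1) by (rule dsc_rep[OF ab'])
    also have "\<dots> = replicate (a+b-1) False @ dsc ((if b > 0 then c+1 else c) # r)"
    proof -
      have "dsc ((if b' > 0 then c+1 else c) # T) = dsc ((if b > 0 then c+1 else c) # r)"
      proof (cases "r = []")
        case True then show ?thesis using C(6) by simp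
      next
        case False
        show ?thesis
        proof (cases "hd r = c")
          case True then show ?thesis using C(7)[OF False] False IH by (simp add: dsc_Cons)
        next
          case F2: False 
          have "T \<noteq> [] \<and> hd T = hd r \<and> hd r \<noteq> c + 1" using C(8)[OF False F2] by blast
          then show ?thesis using False F2 IH by (auto simp add: dsc_Cons)
        qed
      qed
      then show ?thesis using ab by simp
    qed
    also have "\<dots> = dsc xs" using dsc_rep[OF ab(2), of c r] by (subst C(2)) simp
    finally show ?thesis unfolding xs_def .
  next
    case False
    have F': "v \<noteq> c \<and> v \<noteq> c + 1" using False by blast
    then have nL: "\<not> L" using 2(3) by (auto simp: isx_def)
    have IH: "dsc (tr c False vs) = dsc vs" using 2(1)[OF F'] by simp
    show ?thesis
    proof (cases "vs = []")
      case True then show ?thesis using F' by simp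
    next
      case ne: False
      have H: "tr c False vs \<noteq> [] \<and> (hd vs \<noteq> c \<and> hd vs \<noteq> c + 1 \<longrightarrow> hd (tr c False vs) = hd vs)
        \<and> (hd vs = c \<or> hd vs = c + 1 \<longrightarrow> hd (tr c False vs) = c \<or> hd (tr c False vs) = c + 1)"
        using hd_tr[OF ne, of False c] by blast
      have "(v > hd (tr c False vs)) = (v > hd vs)"
        using H F' by (cases "hd vs = c \<or> hd vs = c + 1") auto
      then show ?thesis using F' ne H IH by (simp add: dsc_Cons)
    qed
  qed
qed

lemma dsc_nth: "Suc j < length w \<Longrightarrow> dsc w ! j = (w ! j > w ! Suc j)"
proof (induction w arbitrary: j rule: dsc.induct)
  case (1 u w r)
  then show ?case by (cases j) auto
qed auto

lemma DES_eq:
  assumes "length w1 = length w2" "dsc w1 = dsc w2"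
  shows "DES w1 = DES w2"
proof -
  have "\<forall>i \<in> {1..<length w1}. (w1!(i-1) > w1!i) = (w2!(i-1) > w2!i)"
  proof
    fix i assume i: "i \<in> {1..<length w1}"
    then have "Suc (i - 1) < length w1" "Suc (i-1) = i" by auto
    then show "(w1!(i-1) > w1!i) = (w2!(i-1) > w2!i)"
      using dsc_nth[of "i-1" w1] dsc_nth[of "i-1" w2] assms by metis
  qed
  then show ?thesis unfolding DES_def using assms(1) by auto
qed

lemma pos_red_nth: "p < length w \<Longrightarrow> pos_red w ! p = (if w ! p > 0 then int (card {y \<in> set w. 0 < y \<and> y \<le> w ! p}) else w ! p)"
  unfolding pos_red_def by simp

lemma pos_red_pos: "p < length w \<Longrightarrow> w ! p > 0 \<Longrightarrow> pos_red w ! p > 0"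
proof -
  assume p: "p < length w" "w ! p > 0"
  have "w ! p \<in> {y \<in> set w. 0 < y \<and> y \<le> w ! p}" using p by auto
  then have "card {y \<in> set w. 0 < y \<and> y \<le> w ! p} > 0" by (auto simp: card_gt_0_iff)
  then show ?thesis using p pos_red_nth by simp
qed

lemma pos_red_eq:
  assumes l: "length w1 = length w2"
    and h: "\<forall>q < length w1. (w1!q > 0 \<longleftrightarrow> w2!q > 0) \<and> (w1!q > 0 \<longrightarrow> w1!q = w2!q)"
    and p: "p < length w1" "w1 ! p > 0"
  shows "pos_red w1 ! p = pos_red w2 ! p"
proof -
  have H: "\<And>q. q < length w1 \<Longrightarrow> (w1!q > 0 \<longleftrightarrow> w2!q > 0) \<and> (w1!q > 0 \<longrightarrow> w1!q = w2!q)"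
    using h by blast
  have "{y \<in> set w1. 0 < y} = {y \<in> set w2. 0 < y}"
  proof
    show "{y \<in> set w1. 0 < y} \<subseteq> {y \<in> set w2. 0 < y}"
    proof
      fix y assume "y \<in> {y \<in> set w1. 0 < y}"
      then obtain q where q: "q < length w1" "w1 ! q = y" "0 < y" by (auto simp: in_set_conv_nth)
      have "w2 ! q = y" using H[OF q(1)] q(2,3) by simp
      moreover have "q < length w2" using q l by simp
      ultimately have "y \<in> set w2" using nth_mem by blast
      then show "y \<in> {y \<in> set w2. 0 < y}" using q by simp
    qed
    show "{y \<in> set w2. 0 < y} \<subseteq> {y \<in> set w1. 0 < y}"
    proof
      fix y assume "y \<in> {y \<in> set w2. 0 < y}"
      then obtain q where q: "q < length w2" "w2 ! q = y" "0 < y" by (auto simp: in_set_conv_nth)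
      have q1: "q < length w1" using q l by simp
      have "w1 ! q = y" using H[OF q1] q(2,3) by auto
      then have "y \<in> set w1" using nth_mem q1 by blast
      then show "y \<in> {y \<in> set w1. 0 < y}" using q by simp
    qed
  qed
  then have "{y \<in> set w1. 0 < y \<and> y \<le> w1 ! p} = {y \<in> set w2. 0 < y \<and> y \<le> w1 ! p}" by blast
  moreover have "w2 ! p = w1 ! p" "w2 ! p > 0" using H[OF p(1)] p(2) by auto
  moreover have "p < length w2" using p l by simp
  ultimately show ?thesis using pos_red_nth[of p w1] pos_red_nth[of p w2] p by simp
qed

definition raw :: "nat \<Rightarrow> (nat \<Rightarrow> nat) \<times> (nat \<Rightarrow> int) \<Rightarrow> int list" where
  "raw n a = map (\<lambda>i. if fst a i = i then snd a i else int (fst a i)) [1..<n+1]"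

lemma df_raw: "df n a = pos_red (raw n a)" unfolding df_def raw_def ..

lemma len_raw: "length (raw n a) = n" unfolding raw_def by simp
lemma len_df: "length (df n a) = n" unfolding df_raw pos_red_def by (simp add: len_raw)

lemma raw_nth: "p < n \<Longrightarrow> raw n a ! p = (if fst a (Suc p) = Suc p then snd a (Suc p) else int (fst a (Suc p)))"
  unfolding raw_def by (simp del: upt_Suc add: nth_upt)

lemma FIX_iff: "Suc p \<in> FIX n \<pi> \<longleftrightarrow> p < n \<and> \<pi> (Suc p) = Suc p"
  unfolding FIX_def by auto

lemma raw_fix:
  assumes "a \<in> arrangements n k" "p < n" "Suc p \<in> FIX n (fst a)"
  shows "raw n a ! p = snd a (Suc p)" "snd a (Suc p) \<le> -1" "snd a (Suc p) \<ge> - int k"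
proof -
  obtain \<pi> \<phi> where a: "a = (\<pi>, \<phi>)" by (cases a)
  have F: "\<pi> (Suc p) = Suc p" using assms(3) a by (simp add: FIX_def)
  show "raw n a ! p = snd a (Suc p)" using raw_nth[OF assms(2)] F a by simp
  have "\<phi> (Suc p) \<in> {- int k..-1}" using assms(1,3) a unfolding arrangements_def by auto
  then show "snd a (Suc p) \<le> -1" "snd a (Suc p) \<ge> - int k" using a by auto
qed

lemma raw_nfix:
  assumes "a \<in> arrangements n k" "p < n" "Suc p \<notin> FIX n (fst a)"
  shows "raw n a ! p > 0" "raw n a ! p = int (fst a (Suc p))"
proof -
  obtain \<pi> \<phi> where a: "a = (\<pi>, \<phi>)" by (cases a)
  have perm: "\<pi> permutes {1..n}" using assms(1) a unfolding arrangements_def by auto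
  have F: "\<pi> (Suc p) \<noteq> Suc p" using assms(2,3) a by (simp add: FIX_def)
  have "Suc p \<in> {1..n}" using assms(2) by auto
  then have "\<pi> (Suc p) \<in> {1..n}" using permutes_in_image[OF perm, of "Suc p"] by blast
  then show "raw n a ! p > 0" "raw n a ! p = int (fst a (Suc p))" using raw_nth[OF assms(2)] F a by auto
qed

lemma df_fix:
  assumes "a \<in> arrangements n k" "p < n" "Suc p \<in> FIX n (fst a)"
  shows "df n a ! p = snd a (Suc p)"
  using raw_fix[OF assms] pos_red_nth[of p "raw n a"] assms(2) unfolding df_raw by (simp add: len_raw)

lemma df_nfix:
  assumes "a \<in> arrangements n k" "p < n" "Suc p \<notin> FIX n (fst a)"
  shows "df n a ! p > 0"
  using raw_nfix[OF assms] pos_red_pos[of p "raw n a"] assms(2) unfolding df_raw by (simp add: len_raw)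

definition Fm :: "nat \<Rightarrow> int \<Rightarrow> (nat \<Rightarrow> nat) \<times> (nat \<Rightarrow> int) \<Rightarrow> (nat \<Rightarrow> nat) \<times> (nat \<Rightarrow> int)" where
  "Fm n c a = (fst a, \<lambda>j. if j \<in> FIX n (fst a) then tr c False (df n a) ! (j - 1) else 0)"

lemma tr_len: "length (tr c False W) = length W"
  using arg_cong[OF tr_msk[of False c W], of length] by simp

lemma tr_nth:
  assumes "p < length W"
  shows "W!p \<noteq> c \<and> W!p \<noteq> c+1 \<Longrightarrow> tr c False W ! p = W!p"
    and "W!p = c \<or> W!p = c+1 \<Longrightarrow> tr c False W ! p = c \<or> tr c False W ! p = c+1"
proof -
  have "map (msk c) (tr c False W) ! p = map (msk c) W ! p" using tr_msk[of False c W] by simp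
  then have m: "msk c (tr c False W ! p) = msk c (W ! p)" using assms tr_len[of c W] by simp
  show "W!p \<noteq> c \<and> W!p \<noteq> c+1 \<Longrightarrow> tr c False W ! p = W!p"
    using m unfolding msk_def by (auto split: if_splits)
  show "W!p = c \<or> W!p = c+1 \<Longrightarrow> tr c False W ! p = c \<or> tr c False W ! p = c+1"
    using m unfolding msk_def by (auto split: if_splits)
qed

lemma fst_Fm[simp]: "fst (Fm n c a) = fst a" unfolding Fm_def by simp

lemma raw_Fm: "p < n \<Longrightarrow> raw n (Fm n c a) ! p = (if Suc p \<in> FIX n (fst a) then tr c False (df n a) ! p else raw n a ! p)"
  using raw_nth[of p n "Fm n c a"] raw_nth[of p n a] unfolding Fm_def by (auto simp: FIX_iff)

lemma T_neg:
  assumes "a \<in> arrangements n k" "c + 1 < 0" "p < n" "Suc p \<in> FIX n (fst a)"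
  shows "tr c False (df n a) ! p < 0"
proof -
  have W: "df n a ! p < 0" using df_fix[OF assms(1,3,4)] raw_fix(2)[OF assms(1,3,4)] by simp
  have l: "p < length (df n a)" using assms(3) len_df by simp
  show ?thesis
  proof (cases "df n a ! p = c \<or> df n a ! p = c + 1")
    case True
    then have "tr c False (df n a) ! p = c \<or> tr c False (df n a) ! p = c + 1"
      using tr_nth(2)[OF l, where c=c] by blast
    then show ?thesis using assms(2) by auto
  next
    case False then show ?thesis using tr_nth(1)[OF l, where c=c] W by auto
  qed
qed

lemma dfF:
  assumes A: "a \<in> arrangements n k" and c: "c + 1 < 0"
  shows "df n (Fm n c a) = tr c False (df n a)"
proof (rule nth_equalityI)
  show "length (df n (Fm n c a)) = length (tr c False (df n a))"
    by (simp add: len_df tr_len)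
  fix p assume "p < length (df n (Fm n c a))"
  then have p: "p < n" by (simp add: len_df)
  define W where "W = df n a"
  define T where "T = tr c False W"
  have lW: "p < length W" using p len_df W_def by simp
  show "df n (Fm n c a) ! p = tr c False (df n a) ! p"
  proof (cases "Suc p \<in> FIX n (fst a)")
    case True
    have "raw n (Fm n c a) ! p = T ! p" using raw_Fm[OF p, of c a] True unfolding T_def W_def by simp
    moreover have "T ! p < 0" using T_neg[OF A c p True] unfolding T_def W_def .
    ultimately show ?thesis using pos_red_nth[of p "raw n (Fm n c a)"] p unfolding df_raw T_def W_def
      by (simp add: len_raw)
  next
    case False
    have H: "\<forall>q < length (raw n (Fm n c a)). (raw n (Fm n c a)!q > 0 \<longleftrightarrow> raw n a!q > 0) \<and> (raw n (Fm n c a)!q > 0 \<longrightarrow> raw n (Fm n c a)!q = raw n a!q)"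
    proof (intro allI impI)
      fix q assume "q < length (raw n (Fm n c a))"
      then have q: "q < n" by (simp add: len_raw)
      show "(raw n (Fm n c a)!q > 0 \<longleftrightarrow> raw n a!q > 0) \<and> (raw n (Fm n c a)!q > 0 \<longrightarrow> raw n (Fm n c a)!q = raw n a!q)"
      proof (cases "Suc q \<in> FIX n (fst a)")
        case True
        have "raw n (Fm n c a) ! q < 0" using raw_Fm[OF q, of c a] True T_neg[OF A c q True] by simp
        moreover have "raw n a ! q < 0" using raw_fix[OF A q True] by simp
        ultimately show ?thesis by simp
      next
        case False
        then show ?thesis using raw_Fm[OF q, of c a] by simp
      qed
    qed
    have r1: "raw n (Fm n c a) ! p = raw n a ! p" using raw_Fm[OF p, of c a] False by simp
    have r2: "raw n a ! p > 0" using raw_nfix(1)[OF A p False] .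
    have "pos_red (raw n (Fm n c a)) ! p = pos_red (raw n a) ! p"
      by (rule pos_red_eq[OF _ H]) (use p r1 r2 in \<open>simp_all add: len_raw\<close>)
    then have "df n (Fm n c a) ! p = W ! p" unfolding df_raw W_def .
    moreover have "W ! p > 0" using df_nfix[OF A p False] W_def by simp
    moreover have "T ! p = W ! p" using tr_nth(1)[OF lW, where c=c] \<open>W ! p > 0\<close> c unfolding T_def by auto
    ultimately show ?thesis unfolding T_def W_def by simp
  qed
qed

lemma Fm_arr:
  assumes A: "a \<in> arrangements n k" and c: "c + 1 < 0" "c \<ge> - int k"
  shows "Fm n c a \<in> arrangements n k"
proof -
  have perm: "fst a permutes {1..n}" using A unfolding arrangements_def by auto
  have zero: "\<forall>j. j \<notin> FIX n (fst a) \<longrightarrow> snd (Fm n c a) j = 0" unfolding Fm_def by simp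
  have rng: "\<forall>j \<in> FIX n (fst a). snd (Fm n c a) j \<in> {- int k..-1}"
  proof
    fix j assume j: "j \<in> FIX n (fst a)"
    then obtain p where jp: "j = Suc p" "p < n" unfolding FIX_def by (cases j) auto
    have J: "Suc p \<in> FIX n (fst a)" using j jp by simp
    have l: "p < length (df n a)" using jp len_df by simp
    have W: "df n a ! p \<in> {- int k..-1}" using df_fix[OF A jp(2) J] raw_fix(2,3)[OF A jp(2) J] by simp
    have "tr c False (df n a) ! p \<in> {- int k..-1}"
    proof (cases "df n a ! p = c \<or> df n a ! p = c + 1")
      case True
      then have "tr c False (df n a) ! p = c \<or> tr c False (df n a) ! p = c + 1"
        using tr_nth(2)[OF l, where c=c] by blast
      then show ?thesis using c by auto
    next
      case False then show ?thesis using tr_nth(1)[OF l, where c=c] W by auto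
    qed
    then show "snd (Fm n c a) j \<in> {- int k..-1}" using j jp unfolding Fm_def by simp
  qed
  show ?thesis unfolding arrangements_def using perm zero rng
    by (cases "Fm n c a") (simp add: Fm_def)
qed

lemma Fm_Fm:
  assumes A: "a \<in> arrangements n k" and c: "c + 1 < 0"
  shows "Fm n c (Fm n c a) = a"
proof -
  have d: "df n (Fm n c a) = tr c False (df n a)" by (rule dfF[OF A c])
  have "snd (Fm n c (Fm n c a)) = snd a"
  proof
    fix j
    show "snd (Fm n c (Fm n c a)) j = snd a j"
    proof (cases "j \<in> FIX n (fst a)")
      case True
      then obtain p where jp: "j = Suc p" "p < n" unfolding FIX_def by (cases j) auto
      have J: "Suc p \<in> FIX n (fst a)" using True jp by simp
      have "snd (Fm n c (Fm n c a)) j = tr c False (tr c False (df n a)) ! p"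
        using True jp d unfolding Fm_def by simp
      also have "\<dots> = df n a ! p" using tr_inv[of False c "df n a"] by simp
      also have "\<dots> = snd a j" using df_fix[OF A jp(2) J] jp by simp
      finally show ?thesis .
    next
      case False
      then have "snd a j = 0" using A unfolding arrangements_def by auto
      then show ?thesis using False unfolding Fm_def by simp
    qed
  qed
  then show ?thesis by (simp add: prod_eq_iff)
qed

lemma Fm_DEZ:
  assumes A: "a \<in> arrangements n k" and c: "c + 1 < 0"
  shows "DEZ n (Fm n c a) = DEZ n a"
  unfolding DEZ_def dfF[OF A c] using DES_eq[OF tr_len tr_dsc[of False c]] by simp

lemma Fm_Der:
  assumes A: "a \<in> arrangements n k" and c: "c + 1 < 0"
  shows "Der n (Fm n c a) = Der n a"
  unfolding Der_def Pos_def dfF[OF A c] using c by (intro tr_filter) auto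

lemma fixcount_cnt:
  assumes A: "a \<in> arrangements n k" and t: "t \<ge> 1"
  shows "fixcount n a t = cnt (- int t) (df n a)"
proof -
  define W where "W = df n a"
  have "{j \<in> FIX n (fst a). snd a j = - int t} = Suc ` {p. p < n \<and> W ! p = - int t}"
  proof
    show "{j \<in> FIX n (fst a). snd a j = - int t} \<subseteq> Suc ` {p. p < n \<and> W ! p = - int t}"
    proof
      fix j assume j: "j \<in> {j \<in> FIX n (fst a). snd a j = - int t}"
      then obtain p where jp: "j = Suc p" "p < n" unfolding FIX_def by (cases j) auto
      have J: "Suc p \<in> FIX n (fst a)" using j jp by simp
      have "W ! p = - int t" using df_fix[OF A jp(2) J] j jp unfolding W_def by simp
      then show "j \<in> Suc ` {p. p < n \<and> W ! p = - int t}" using jp by auto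
    qed
    show "Suc ` {p. p < n \<and> W ! p = - int t} \<subseteq> {j \<in> FIX n (fst a). snd a j = - int t}"
    proof
      fix j assume "j \<in> Suc ` {p. p < n \<and> W ! p = - int t}"
      then obtain p where jp: "j = Suc p" "p < n" "W ! p = - int t" by auto
      have J: "Suc p \<in> FIX n (fst a)"
      proof (rule ccontr)
        assume "Suc p \<notin> FIX n (fst a)"
        then have "W ! p > 0" using df_nfix[OF A jp(2)] unfolding W_def by simp
        then show False using jp(3) by simp
      qed
      have "snd a (Suc p) = - int t" using df_fix[OF A jp(2) J] jp(3) unfolding W_def by simp
      then show "j \<in> {j \<in> FIX n (fst a). snd a j = - int t}" using J jp by simp
    qed
  qed
  then have "fixcount n a t = card (Suc ` {p. p < n \<and> W ! p = - int t})" unfolding fixcount_def by simp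
  also have "\<dots> = card {p. p < n \<and> W ! p = - int t}" by (simp add: card_image)
  also have "\<dots> = cnt (- int t) W" unfolding cnt_def length_filter_conv_card using len_df W_def by simp
  finally show ?thesis unfolding W_def .
qed

definition Rl :: "nat \<Rightarrow> nat \<Rightarrow> (nat \<Rightarrow> nat) \<Rightarrow> (nat \<Rightarrow> nat) \<Rightarrow> bool" where
  "Rl n k m m' = (\<exists>f. bij_betw f (arrangements_m n k m) (arrangements_m n k m')
           \<and> (\<forall>a \<in> arrangements_m n k m. DEZ n (f a) = DEZ n a \<and> Der n (f a) = Der n a))"

lemma fixcount_Fm:
  assumes A: "a \<in> arrangements n k" and i: "1 \<le> i" "i < k" and t: "t \<ge> 1"
  shows "fixcount n (Fm n (- int i - 1) a) t = fixcount n a (Transposition.transpose i (Suc i) t)"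
proof -
  define c where "c = - int i - 1"
  have c: "c + 1 < 0" "c \<ge> - int k" using i unfolding c_def by auto
  have A': "Fm n c a \<in> arrangements n k" by (rule Fm_arr[OF A c])
  have "fixcount n (Fm n c a) t = cnt (- int t) (tr c False (df n a))"
    using fixcount_cnt[OF A' t] dfF[OF A c(1)] by simp
  also have "\<dots> = fixcount n a (Transposition.transpose i (Suc i) t)"
  proof -
    have TC: "cnt c (tr c False (df n a)) = cnt (c+1) (df n a) \<and> cnt (c+1) (tr c False (df n a)) = cnt c (df n a)"
      using tr_count[of False c "df n a"] by simp
    consider "t = i" | "t = Suc i" | "t \<noteq> i \<and> t \<noteq> Suc i" by blast
    then show ?thesis
    proof cases
      case 1
      have e: "- int t = c + 1" "- int (Suc i) = c" using 1 unfolding c_def by simp_all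
      have "fixcount n a (Suc i) = cnt c (df n a)" using fixcount_cnt[OF A, of "Suc i"] e(2) by simp
      then show ?thesis using TC e(1) 1 by simp
    next
      case 2
      have e: "- int t = c" "- int i = c + 1" using 2 unfolding c_def by simp_all
      have "fixcount n a i = cnt (c + 1) (df n a)" using fixcount_cnt[OF A, of i] e(2) i by simp
      then show ?thesis using TC e(1) 2 by simp
    next
      case 3
      then have ne: "- int t \<noteq> c" "- int t \<noteq> c + 1" unfolding c_def by auto
      have "cnt (- int t) (tr c False (df n a)) = cnt (- int t) (df n a)"
        unfolding cnt_def using ne by (subst tr_filter) auto
      then show ?thesis using fixcount_cnt[OF A t] 3 by simp
    qed
  qed
  finally show ?thesis unfolding c_def .
qed

lemma Rl_adj:
  assumes i: "1 \<le> i" "i < k"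
  shows "Rl n k m (m \<circ> Transposition.transpose i (Suc i))"
proof -
  define c where "c = - int i - 1"
  define s where "s = Transposition.transpose i (Suc i)"
  have c: "c + 1 < 0" "c \<ge> - int k" using i unfolding c_def by auto
  have sk: "\<And>t. t \<in> {1..k} \<Longrightarrow> s t \<in> {1..k}" using i unfolding s_def transpose_def by auto
  have map: "Fm n c a \<in> arrangements_m n k (m' \<circ> s)" if "a \<in> arrangements_m n k m'" for a m'
  proof -
    have A: "a \<in> arrangements n k" using that unfolding arrangements_m_def by simp
    have "\<forall>t \<in> {1..k}. fixcount n (Fm n c a) t = (m' \<circ> s) t"
    proof
      fix t assume t: "t \<in> {1..k}"
      have "fixcount n (Fm n c a) t = fixcount n a (s t)"
        using fixcount_Fm[OF A i, of t] t unfolding c_def s_def by simp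
      also have "\<dots> = m' (s t)" using that sk[OF t] unfolding arrangements_m_def by simp
      finally show "fixcount n (Fm n c a) t = (m' \<circ> s) t" by simp
    qed
    then show ?thesis using Fm_arr[OF A c] unfolding arrangements_m_def by simp
  qed
  have ss: "m \<circ> s \<circ> s = m" unfolding s_def by (simp add: fun_eq_iff)
  have "bij_betw (Fm n c) (arrangements_m n k m) (arrangements_m n k (m \<circ> s))"
  proof (rule bij_betw_byWitness[where f'="Fm n c"])
    show "\<forall>a\<in>arrangements_m n k m. Fm n c (Fm n c a) = a"
      using Fm_Fm[OF _ c(1)] unfolding arrangements_m_def by auto
    show "\<forall>a\<in>arrangements_m n k (m \<circ> s). Fm n c (Fm n c a) = a"
      using Fm_Fm[OF _ c(1)] unfolding arrangements_m_def by auto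
    show "Fm n c ` arrangements_m n k m \<subseteq> arrangements_m n k (m \<circ> s)"
      using map[of _ m] by auto
    show "Fm n c ` arrangements_m n k (m \<circ> s) \<subseteq> arrangements_m n k m"
      using map[of _ "m \<circ> s"] ss by auto
  qed
  moreover have "\<forall>a \<in> arrangements_m n k m. DEZ n (Fm n c a) = DEZ n a \<and> Der n (Fm n c a) = Der n a"
    using Fm_DEZ[OF _ c(1)] Fm_Der[OF _ c(1)] unfolding arrangements_m_def by auto
  ultimately show ?thesis unfolding Rl_def s_def by blast
qed

lemma Rl_refl: "Rl n k m m"
  unfolding Rl_def by (intro exI[of _ id]) auto

lemma Rl_trans:
  assumes "Rl n k m1 m2" "Rl n k m2 m3" shows "Rl n k m1 m3"
proof -
  obtain f where f: "bij_betw f (arrangements_m n k m1) (arrangements_m n k m2)"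
    "\<forall>a \<in> arrangements_m n k m1. DEZ n (f a) = DEZ n a \<and> Der n (f a) = Der n a"
    using assms(1) unfolding Rl_def by blast
  obtain g where g: "bij_betw g (arrangements_m n k m2) (arrangements_m n k m3)"
    "\<forall>a \<in> arrangements_m n k m2. DEZ n (g a) = DEZ n a \<and> Der n (g a) = Der n a"
    using assms(2) unfolding Rl_def by blast
  have "bij_betw (g \<circ> f) (arrangements_m n k m1) (arrangements_m n k m3)"
    using bij_betw_trans[OF f(1) g(1)] .
  moreover have "\<forall>a \<in> arrangements_m n k m1. DEZ n ((g \<circ> f) a) = DEZ n a \<and> Der n ((g \<circ> f) a) = Der n a"
  proof
    fix a assume a: "a \<in> arrangements_m n k m1"
    then have "f a \<in> arrangements_m n k m2" using bij_betw_apply[OF f(1)] by blast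
    then show "DEZ n ((g \<circ> f) a) = DEZ n a \<and> Der n ((g \<circ> f) a) = Der n a" using f(2) g(2) a by simp
  qed
  ultimately show ?thesis unfolding Rl_def by blast
qed

lemma Rl_transp_aux:
  "1 \<le> a \<Longrightarrow> a + Suc d \<le> k \<Longrightarrow> Rl n k m (m \<circ> Transposition.transpose a (a + Suc d))"
proof (induction d arbitrary: a m)
  case 0
  then have "a < k" by simp
  from Rl_adj[OF 0(1) this, of n m] show ?case by (simp only: add_Suc_right add_0_right)
next
  case (Suc d)
  define s1 where "s1 = Transposition.transpose a (Suc a)"
  define s2 where "s2 = Transposition.transpose (Suc a) (a + Suc (Suc d))"
  have e: "Transposition.transpose a (a + Suc (Suc d)) = s1 \<circ> s2 \<circ> s1"
    unfolding s1_def s2_def by (rule transpose_comp_triple[symmetric]) auto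
  have 1: "Rl n k m (m \<circ> s1)" unfolding s1_def by (rule Rl_adj) (use Suc.prems in simp_all)
  have pre: "1 \<le> Suc a" "Suc a + Suc d \<le> k" using Suc.prems by simp_all
  have eq: "Suc a + Suc d = a + Suc (Suc d)" by simp
  have 2: "Rl n k (m \<circ> s1) (m \<circ> s1 \<circ> s2)"
    using Suc.IH[OF pre, of "m \<circ> s1"] unfolding s2_def eq[symmetric] .
  have 3: "Rl n k (m \<circ> s1 \<circ> s2) (m \<circ> s1 \<circ> s2 \<circ> s1)"
    unfolding s1_def by (rule Rl_adj) (use Suc.prems in simp_all)
  have E: "m \<circ> Transposition.transpose a (a + Suc (Suc d)) = m \<circ> s1 \<circ> s2 \<circ> s1"
    unfolding e by (simp add: o_assoc)
  show ?case unfolding E by (rule Rl_trans[OF Rl_trans[OF 1 2] 3])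
qed

lemma Rl_transp:
  assumes "a \<in> {1..k}" "b \<in> {1..k}"
  shows "Rl n k m (m \<circ> Transposition.transpose a b)"
proof -
  consider "a = b" | "a < b" | "b < a" using less_linear by blast
  then show ?thesis
  proof cases
    case 1 then show ?thesis using Rl_refl[of n k m] by (simp only: transpose_same comp_id)
  next
    case 2
    obtain d where b0: "b = Suc (a + d)" using less_imp_Suc_add[OF 2] by (elim exE)
    then have b: "b = a + Suc d" by simp
    have "1 \<le> a" "a + Suc d \<le> k" using assms b by auto
    from Rl_transp_aux[OF this, of n m] show ?thesis unfolding b .
  next
    case 3
    obtain d where b0: "a = Suc (b + d)" using less_imp_Suc_add[OF 3] by (elim exE)
    then have b: "a = b + Suc d" by simp
    have "1 \<le> b" "b + Suc d \<le> k" using assms b by auto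
    from Rl_transp_aux[OF this, of n m] have "Rl n k m (m \<circ> Transposition.transpose b a)" unfolding b .
    then show ?thesis by (subst transpose_commute)
  qed
qed

lemma Rl_perm:
  assumes "\<tau> permutes {1..k}"
  shows "\<forall>m. Rl n k m (m \<circ> \<tau>)"
  using assms finite_atLeastAtMost
proof (induction rule: permutes_induct)
  case id
  then show ?case using Rl_refl by simp
next
  case (swap a b p)
  show ?case
  proof
    fix m
    have 1: "Rl n k m (m \<circ> Transposition.transpose a b)" by (rule Rl_transp[OF swap(1,2)])
    have 2: "Rl n k (m \<circ> Transposition.transpose a b) (m \<circ> Transposition.transpose a b \<circ> p)"
      using swap.IH by blast
    show "Rl n k m (m \<circ> (Transposition.transpose a b \<circ> p))"
      using Rl_trans[OF 1 2] by (simp add: o_assoc)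
  qed
qed

theorem lemma2p2:
  fixes n k :: nat and m :: "nat \<Rightarrow> nat" and \<tau> :: "nat \<Rightarrow> nat"
  assumes "n \<ge> 1" and "k \<ge> 1" and "\<tau> permutes {1..k}"
  shows "\<exists>f. bij_betw f (arrangements_m n k m) (arrangements_m n k (\<lambda>i. m (\<tau> i)))
           \<and> (\<forall>a \<in> arrangements_m n k m. DEZ n (f a) = DEZ n a \<and> Der n (f a) = Der n a)"
proof -
  have "Rl n k m (m \<circ> \<tau>)" using Rl_perm[OF assms(3)] by blast
  then show ?thesis unfolding Rl_def comp_def .
qed

end
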